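(* The Recursive Measure satisfies the added-blocker postulate. For every SVG $\mathcal{G}=(N,\mathcal{W})$ and all $i,j\in N$ with $j$ not a dummy in $\mathcal{G}$: $$\frac{RM'^+_i(\mathcal{G})}{RM'^+_j(\mathcal{G})}=\frac{RM'^+_i(\mathcal{G}^Y)}{RM'^+_j(\mathcal{G}^Y)}\qquad\text{and}\qquad\frac{RM'^-_i(\mathcal{G})}{RM'^-_j(\mathcal{G})}=\frac{RM'^-_i(\mathcal{G}^N)}{RM'^-_j(\mathcal{G}^N)}.$$
   Context: A simple voting game (SVG) is a pair $\mathcal{G}=(N,\mathcal{W})$ with $N$ a nonempty finite set of players and $\mathcal{W}\subseteq 2^N$ monotone, $\emptyset\notin\mathcal{W}$, $N\in\mathcal{W}$. Divisions are identified with their YES-sets. Decisiveness and success: - Player $k$ is YES-decisive in $S$ if $k\in S\in\mathcal{W}$ and $S\setminus\{k\}\notin\mathcal{W}$. - Player $k$ is NO-decisive in $S$ if $k\notin S\notin\mathcal{W}$ and $S\cup\{k\}\in\mathcal{W}$. - A dummy is never decisive. - Player $k$ is successful in $S$ if ($k\in S\in\mathcal{W}$) or ($k\notin S\notin\mathcal{W}$). Loyal children: if $S\in\mathcal{W}$, they are the sets $S\setminus\{m\}\in\mathcal{W}$ with $m\in S$. If $S\notin\mathcal{W}$, they are the sets $S\cup\{m\}\notin\mathcal{W}$ with $m\notin S$. Recursive efficacy score $\alpha_k(S)$: - $\alpha_k(S)=1$ if $k$ is decisive; - $\alpha_k(S)=0$ if $k$ is not successful; - otherwise, the average of $\alpha_k$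 over the loyal children. For a game with $m$ players: - the a priori RM YES-power is $RM'^+_k=2^{-m}\sum_{S\ni k}\alpha_k(S)$; - the a priori RM NO-power is $RM'^-_k=2^{-m}\sum_{S\not\ni k}\alpha_k(S)$. For a new player $0\notin N$: - $\mathcal{G}^Y=(N\cup\{0\},\{S\cup\{0\}:S\in\mathcal{W}\})$; - $\mathcal{G}^N=(N\cup\{0\},\{S\cup\{0\}:S\subseteq N\}\cup\mathcal{W})$. *)

theory Defs
  imports Complex_Main
begin

definition svg :: "'a set \<Rightarrow> 'a set set \<Rightarrow> bool" where
  "svg N W \<longleftrightarrow> finite N \<and> N \<noteq> {} \<and> W \<subseteq> Pow N \<and>
     (\<forall>S T. S \<in> W \<and> S \<subseteq> T \<and> T \<subseteq> N \<longrightarrow> T \<in> W) \<and>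
     {} \<notin> W \<and> N \<in> W"

definition yes_decisive :: "'a set set \<Rightarrow> 'a \<Rightarrow> 'a set \<Rightarrow> bool" where
  "yes_decisive W k S \<longleftrightarrow> k \<in> S \<and> S \<in> W \<and> S - {k} \<notin> W"

definition no_decisive :: "'a set set \<Rightarrow> 'a \<Rightarrow> 'a set \<Rightarrow> bool" where
  "no_decisive W k S \<longleftrightarrow> k \<notin> S \<and> S \<notin> W \<and> insert k S \<in> W"

definition decisive :: "'a set set \<Rightarrow> 'a \<Rightarrow> 'a set \<Rightarrow> bool" where
  "decisive W k S \<longleftrightarrow> yes_decisive W k S \<or> no_decisive W k S"

definition successful :: "'a set set \<Rightarrow> 'a \<Rightarrow> 'a set \<Rightarrow> bool" where
  "successful W k S \<longleftrightarrow> (k \<in> S \<and> S \<in> W) \<or> (k \<notin> S \<and> S \<notin> W)"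

definition dummy :: "'a set \<Rightarrow> 'a set set \<Rightarrow> 'a \<Rightarrow> bool" where
  "dummy N W k \<longleftrightarrow> (\<forall>S. S \<subseteq> N \<longrightarrow> \<not> decisive W k S)"

definition loyal_children :: "'a set \<Rightarrow> 'a set set \<Rightarrow> 'a set \<Rightarrow> 'a set set" where
  "loyal_children N W S =
     (if S \<in> W then {S - {m} | m. m \<in> S \<and> S - {m} \<in> W}
      else {insert m S | m. m \<in> N \<and> m \<notin> S \<and> insert m S \<notin> W})"

text \<open>Along loyal children the cardinality (winning case) or co-cardinality (losing case)
  strictly decreases, so a budget of card N + 1 is never exhausted.\<close>
fun alpha_fuel :: "nat \<Rightarrow> 'a set \<Rightarrow> 'a set set \<Rightarrow> 'a \<Rightarrow> 'a set \<Rightarrow> real" where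
  "alpha_fuel 0 N W k S = 0"
| "alpha_fuel (Suc n) N W k S =
     (if decisive W k S then 1
      else if \<not> successful W k S then 0
      else (\<Sum>T\<in>loyal_children N W S. alpha_fuel n N W k T) / real (card (loyal_children N W S)))"

definition alpha :: "'a set \<Rightarrow> 'a set set \<Rightarrow> 'a \<Rightarrow> 'a set \<Rightarrow> real" where
  "alpha N W k S = alpha_fuel (Suc (card N)) N W k S"

definition RM_yes :: "'a set \<Rightarrow> 'a set set \<Rightarrow> 'a \<Rightarrow> real" where
  "RM_yes N W k = (\<Sum>S\<in>{S. S \<subseteq> N \<and> k \<in> S}. alpha N W k S) / 2 ^ card N"

definition RM_no :: "'a set \<Rightarrow> 'a set set \<Rightarrow> 'a \<Rightarrow> real" where
  "RM_no N W k = (\<Sum>S\<in>{S. S \<subseteq> N \<and> k \<notin> S}. alpha N W k S) / 2 ^ card N"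

text \<open>Adding a new player z (z \<notin> N): G^Y (z is a blocker / vetoer) and G^N.\<close>
definition W_Y :: "'a \<Rightarrow> 'a set set \<Rightarrow> 'a set set" where
  "W_Y z W = {insert z S | S. S \<in> W}"

definition W_N :: "'a \<Rightarrow> 'a set \<Rightarrow> 'a set set \<Rightarrow> 'a set set" where
  "W_N z N W = {insert z S | S. S \<subseteq> N} \<union> W"

end

theory Submission
  imports Defs
begin

lemma svgD: assumes "svg N W" shows "finite N" "W \<subseteq> Pow N" "{} \<notin> W" "N \<in> W"
  using assms unfolding svg_def by auto

lemma alpha_stab:
  assumes svg: "svg N W"
  shows "S \<subseteq> N \<Longrightarrow> (if S \<in> W then card S else card (N - S)) < n \<Longrightarrow>
     alpha_fuel n N W k S = alpha_fuel (Suc n) N W k S"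
proof (induction n arbitrary: S)
  case 0 then show ?case by simp
next
  case (Suc n)
  have fin: "finite N" using svgD[OF svg] by simp
  have ch: "alpha_fuel n N W k T = alpha_fuel (Suc n) N W k T" if T: "T \<in> loyal_children N W S" for T
  proof (cases "S \<in> W")
    case True
    then obtain m where m: "m \<in> S" "T = S - {m}" "T \<in> W" using T unfolding loyal_children_def by auto
    have "T \<subseteq> N" using m Suc.prems by auto
    moreover have "card T < card S" using m fin Suc.prems
      by (metis card_Diff1_less finite_subset)
    ultimately show ?thesis using Suc.IH Suc.prems True m by auto
  next
    case False
    then obtain m where m: "m \<in> N" "m \<notin> S" "T = insert m S" "T \<notin> W" using T unfolding loyal_children_def by auto
    have "T \<subseteq> N" using m Suc.prems by auto
    moreover have "card (N - T) < card (N - S)" using m fin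
      by (metis Diff_iff Diff_insert card_Diff1_less finite_Diff)
    ultimately show ?thesis using Suc.IH Suc.prems False m by auto
  qed
  have "(\<Sum>T\<in>loyal_children N W S. alpha_fuel n N W k T) = (\<Sum>T\<in>loyal_children N W S. alpha_fuel (Suc n) N W k T)"
    by (rule sum.cong) (auto simp: ch)
  then show ?case
    by (simp only: alpha_fuel.simps(2)[of n N W k S] alpha_fuel.simps(2)[of "Suc n" N W k S])
qed

lemma alpha_stab2:
  assumes svg: "svg N W" and "S \<subseteq> N"
  shows "alpha_fuel (Suc (card N)) N W k S = alpha_fuel (Suc (Suc (card N))) N W k S"
proof (rule alpha_stab[OF svg assms(2)])
  have "finite N" using svgD[OF svg] by simp
  then show "(if S \<in> W then card S else card (N - S)) < Suc (card N)"
    using assms(2) by (simp add: card_mono le_imp_less_Suc)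
qed

lemma memY: assumes svg: "svg N W" and "z \<notin> N" "z \<notin> S"
  shows "insert z S \<in> W_Y z W \<longleftrightarrow> S \<in> W"
proof
  assume "insert z S \<in> W_Y z W"
  then obtain S' where "insert z S = insert z S'" "S' \<in> W" unfolding W_Y_def by auto
  moreover have "z \<notin> S'" using svgD(2)[OF svg] \<open>S' \<in> W\<close> assms(2) by auto
  ultimately show "S \<in> W" using assms(3) by (metis Diff_insert_absorb)
qed (auto simp: W_Y_def)

lemma nmemY: "z \<notin> T \<Longrightarrow> T \<notin> W_Y z W" unfolding W_Y_def by auto

lemma memN: "z \<notin> T \<Longrightarrow> T \<in> W_N z N W \<longleftrightarrow> T \<in> W" unfolding W_N_def by auto
lemma memN2: "S \<subseteq> N \<Longrightarrow> insert z S \<in> W_N z N W" unfolding W_N_def by auto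

lemma lcY:
  assumes svg: "svg N W" and z: "z \<notin> N" and S: "S \<subseteq> N"
  shows "loyal_children (insert z N) (W_Y z W) (insert z S) = insert z ` loyal_children N W S"
proof -
  have zS: "z \<notin> S" using S z by auto
  have W: "W \<subseteq> Pow N" using svgD[OF svg] by simp
  show ?thesis
  proof (cases "S \<in> W")
    case True
    hence T: "insert z S \<in> W_Y z W" using memY[OF svg z zS] by simp
    show ?thesis
    proof (rule set_eqI, rule iffI)
      fix X assume "X \<in> loyal_children (insert z N) (W_Y z W) (insert z S)"
      then obtain m where m: "m \<in> insert z S" "X = insert z S - {m}" "X \<in> W_Y z W"
        using T unfolding loyal_children_def by auto
      have "m \<noteq> z" using m nmemY[of z X W] by auto
      hence X: "X = insert z (S - {m})" "m \<in> S" using m by auto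
      hence "S - {m} \<in> W" using m(3) memY[OF svg z, of "S - {m}"] zS by auto
      then show "X \<in> insert z ` loyal_children N W S" using X True unfolding loyal_children_def by auto
    next
      fix X assume "X \<in> insert z ` loyal_children N W S"
      then obtain m where m: "m \<in> S" "X = insert z (S - {m})" "S - {m} \<in> W"
        using True unfolding loyal_children_def by auto
      have "X \<in> W_Y z W" using m memY[OF svg z, of "S - {m}"] zS by auto
      moreover have "X = insert z S - {m}" using m zS by auto
      ultimately show "X \<in> loyal_children (insert z N) (W_Y z W) (insert z S)"
        using T m unfolding loyal_children_def by auto
    qed
  next
    case False
    hence T: "insert z S \<notin> W_Y z W" using memY[OF svg z zS] by simp
    show ?thesis
    proof (rule set_eqI, rule iffI)
      fix X assume "X \<in> loyal_children (insert z N) (W_Y z W) (insert z S)"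
      then obtain m where m: "m \<in> insert z N" "m \<notin> insert z S" "X = insert m (insert z S)" "X \<notin> W_Y z W"
        using T unfolding loyal_children_def by auto
      have X: "X = insert z (insert m S)" "m \<in> N" "m \<notin> S" using m by auto
      have "z \<notin> insert m S" using X zS z by auto
      hence "insert m S \<notin> W" using m(4) memY[OF svg z, of "insert m S"] X by auto
      then show "X \<in> insert z ` loyal_children N W S" using X False unfolding loyal_children_def by auto
    next
      fix X assume "X \<in> insert z ` loyal_children N W S"
      then obtain m where m: "m \<in> N" "m \<notin> S" "X = insert z (insert m S)" "insert m S \<notin> W"
        using False unfolding loyal_children_def by auto
      have "z \<notin> insert m S" using m zS z by auto
      hence "X \<notin> W_Y z W" using m memY[OF svg z, of "insert m S"] by auto
      moreover have "X = insert m (insert z S)" "m \<notin> insert z S" using m z by auto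
      ultimately show "X \<in> loyal_children (insert z N) (W_Y z W) (insert z S)"
        using T m unfolding loyal_children_def by auto
    qed
  qed
qed

lemma lc_sub: assumes "svg N W" "S \<subseteq> N" "T \<in> loyal_children N W S" shows "T \<subseteq> N"
  using assms unfolding loyal_children_def by (auto split: if_splits)

lemma alphaY:
  assumes svg: "svg N W" and z: "z \<notin> N" and k: "k \<noteq> z"
  shows "S \<subseteq> N \<Longrightarrow> alpha_fuel n (insert z N) (W_Y z W) k (insert z S) = alpha_fuel n N W k S"
proof (induction n arbitrary: S)
  case 0 then show ?case by simp
next
  case (Suc n)
  have zS: "z \<notin> S" using Suc.prems z by auto
  have W: "W \<subseteq> Pow N" using svgD[OF svg] by simp
  have m1: "insert z S \<in> W_Y z W \<longleftrightarrow> S \<in> W" by (rule memY[OF svg z zS])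
  have m2: "insert z S - {k} \<in> W_Y z W \<longleftrightarrow> S - {k} \<in> W"
    using memY[OF svg z, of "S - {k}"] zS k by (simp add: insert_Diff_if)
  have m3: "insert k (insert z S) \<in> W_Y z W \<longleftrightarrow> insert k S \<in> W"
    using memY[OF svg z, of "insert k S"] zS k by (simp add: insert_commute)
  have dec: "decisive (W_Y z W) k (insert z S) \<longleftrightarrow> decisive W k S"
    unfolding decisive_def yes_decisive_def no_decisive_def using m1 m2 m3 k by auto
  have suc: "successful (W_Y z W) k (insert z S) \<longleftrightarrow> successful W k S"
    unfolding successful_def using m1 k by auto
  have lc: "loyal_children (insert z N) (W_Y z W) (insert z S) = insert z ` loyal_children N W S"
    by (rule lcY[OF svg z Suc.prems])
  have inj: "inj_on (insert z) (loyal_children N W S)"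
  proof (rule inj_onI)
    fix A B assume "A \<in> loyal_children N W S" "B \<in> loyal_children N W S" "insert z A = insert z B"
    moreover have "z \<notin> A" "z \<notin> B" using lc_sub[OF svg Suc.prems] calculation z by auto
    ultimately show "A = B" by (metis Diff_insert_absorb)
  qed
  have sm: "(\<Sum>T\<in>loyal_children (insert z N) (W_Y z W) (insert z S). alpha_fuel n (insert z N) (W_Y z W) k T)
      = (\<Sum>T\<in>loyal_children N W S. alpha_fuel n N W k T)"
    unfolding lc sum.reindex[OF inj] o_def
    by (rule sum.cong) (simp_all add: Suc.IH lc_sub[OF svg Suc.prems])
  have cd: "card (loyal_children (insert z N) (W_Y z W) (insert z S)) = card (loyal_children N W S)"
    unfolding lc using card_image[OF inj] .
  show ?case
    by (simp only: alpha_fuel.simps(2)[of n "insert z N" "W_Y z W" k "insert z S"]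
        alpha_fuel.simps(2)[of n N W k S] dec suc sm cd)
qed

lemma lcN:
  assumes svg: "svg N W" and z: "z \<notin> N" and S: "S \<subseteq> N"
  shows "loyal_children (insert z N) (W_N z N W) S = loyal_children N W S"
proof -
  have zS: "z \<notin> S" using S z by auto
  have W: "W \<subseteq> Pow N" using svgD[OF svg] by simp
  have m1: "S \<in> W_N z N W \<longleftrightarrow> S \<in> W" using memN zS by metis
  show ?thesis
  proof (cases "S \<in> W")
    case True
    have "S - {m} \<in> W_N z N W \<longleftrightarrow> S - {m} \<in> W" for m using memN[of z "S - {m}"] zS by auto
    then show ?thesis using True m1 unfolding loyal_children_def by auto
  next
    case False
    have "m \<in> N \<Longrightarrow> insert m S \<in> W_N z N W \<longleftrightarrow> insert m S \<in> W" for m using memN[of z "insert m S"] zS z by auto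
    moreover have "insert z S \<in> W_N z N W" using memN2[OF S] .
    ultimately show ?thesis using False m1 unfolding loyal_children_def by auto
  qed
qed

lemma alphaN:
  assumes svg: "svg N W" and z: "z \<notin> N" and k: "k \<noteq> z"
  shows "S \<subseteq> N \<Longrightarrow> alpha_fuel n (insert z N) (W_N z N W) k S = alpha_fuel n N W k S"
proof (induction n arbitrary: S)
  case 0 then show ?case by simp
next
  case (Suc n)
  have zS: "z \<notin> S" using Suc.prems z by auto
  have m1: "S \<in> W_N z N W \<longleftrightarrow> S \<in> W" using memN zS by metis
  have m2: "S - {k} \<in> W_N z N W \<longleftrightarrow> S - {k} \<in> W" using memN[of z "S - {k}"] zS by auto
  have m3: "insert k S \<in> W_N z N W \<longleftrightarrow> insert k S \<in> W" using memN[of z "insert k S"] zS k by auto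
  have dec: "decisive (W_N z N W) k S \<longleftrightarrow> decisive W k S"
    unfolding decisive_def yes_decisive_def no_decisive_def using m1 m2 m3 by auto
  have suc: "successful (W_N z N W) k S \<longleftrightarrow> successful W k S"
    unfolding successful_def using m1 by auto
  have lc: "loyal_children (insert z N) (W_N z N W) S = loyal_children N W S"
    by (rule lcN[OF svg z Suc.prems])
  have sm: "(\<Sum>T\<in>loyal_children (insert z N) (W_N z N W) S. alpha_fuel n (insert z N) (W_N z N W) k T)
      = (\<Sum>T\<in>loyal_children N W S. alpha_fuel n N W k T)"
    unfolding lc by (rule sum.cong) (simp_all add: Suc.IH lc_sub[OF svg Suc.prems])
  show ?case
    by (simp only: alpha_fuel.simps(2)[of n "insert z N" "W_N z N W" k S]
        alpha_fuel.simps(2)[of n N W k S] dec suc sm) (simp only: lc)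
qed

lemma split_sets:
  assumes z: "z \<notin> N"
  shows "{S. S \<subseteq> insert z N \<and> P S} = {S. S \<subseteq> N \<and> P S} \<union> insert z ` {S. S \<subseteq> N \<and> P (insert z S)}"
proof (rule set_eqI, rule iffI)
  fix S assume "S \<in> {S. S \<subseteq> insert z N \<and> P S}"
  then show "S \<in> {S. S \<subseteq> N \<and> P S} \<union> insert z ` {S. S \<subseteq> N \<and> P (insert z S)}"
  proof (cases "z \<in> S")
    case True
    with \<open>S \<in> _\<close> have "S = insert z (S - {z})" "S - {z} \<subseteq> N" by auto
    moreover have "P (insert z (S - {z}))" using True \<open>S \<in> _\<close> by (simp add: insert_absorb)
    ultimately show ?thesis by blast
  qed auto
qed (auto simp: insert_absorb)

lemma inj_ins: "z \<notin> N \<Longrightarrow> inj_on (insert z) {S. S \<subseteq> N \<and> P S}"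
  by (rule inj_onI) (metis Diff_insert_absorb mem_Collect_eq subsetD)

lemma RMY:
  assumes svg: "svg N W" and z: "z \<notin> N" and i: "i \<in> N"
  shows "RM_yes (insert z N) (W_Y z W) i = RM_yes N W i / 2"
proof -
  have fin: "finite N" using svgD[OF svg] by simp
  have iz: "i \<noteq> z" using i z by auto
  let ?A = "{S. S \<subseteq> N \<and> i \<in> S}"
  let ?B = "{S. S \<subseteq> N \<and> i \<in> insert z S}"
  have B: "?B = ?A" using iz by auto
  have finA: "finite ?A" using fin by simp
  have disj: "?A \<inter> insert z ` ?B = {}" using z by auto
  have zero: "alpha (insert z N) (W_Y z W) i S = 0" if "S \<in> ?A" for S
  proof -
    have "z \<notin> S" using that z by auto
    hence "S \<notin> W_Y z W" by (rule nmemY)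
    hence "\<not> decisive (W_Y z W) i S" "\<not> successful (W_Y z W) i S" using that
      unfolding decisive_def yes_decisive_def no_decisive_def successful_def by auto
    then show ?thesis unfolding alpha_def by simp
  qed
  have eq: "alpha (insert z N) (W_Y z W) i (insert z S) = alpha N W i S" if "S \<in> ?A" for S
  proof -
    have "S \<subseteq> N" using that by simp
    then have "alpha_fuel (Suc (Suc (card N))) (insert z N) (W_Y z W) i (insert z S) = alpha_fuel (Suc (Suc (card N))) N W i S"
      using alphaY[OF svg z iz] by blast
    also have "\<dots> = alpha_fuel (Suc (card N)) N W i S" using alpha_stab2[OF svg \<open>S \<subseteq> N\<close>] by simp
    finally show ?thesis unfolding alpha_def using fin z by simp
  qed
  have "(\<Sum>S\<in>{S. S \<subseteq> insert z N \<and> i \<in> S}. alpha (insert z N) (W_Y z W) i S)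
     = (\<Sum>S\<in>?A. alpha (insert z N) (W_Y z W) i S) + (\<Sum>S\<in>insert z ` ?B. alpha (insert z N) (W_Y z W) i S)"
    unfolding split_sets[OF z] by (rule sum.union_disjoint) (use finA B disj in auto)
  also have "\<dots> = (\<Sum>S\<in>?A. alpha N W i S)"
    unfolding B sum.reindex[OF inj_ins[OF z]] o_def using zero eq by simp
  finally show ?thesis unfolding RM_yes_def using fin z by simp
qed

lemma RMN:
  assumes svg: "svg N W" and z: "z \<notin> N" and i: "i \<in> N"
  shows "RM_no (insert z N) (W_N z N W) i = RM_no N W i / 2"
proof -
  have fin: "finite N" using svgD[OF svg] by simp
  have iz: "i \<noteq> z" using i z by auto
  let ?A = "{S. S \<subseteq> N \<and> i \<notin> S}"
  let ?B = "{S. S \<subseteq> N \<and> i \<notin> insert z S}"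
  have B: "?B = ?A" using iz by auto
  have finA: "finite ?A" using fin by simp
  have disj: "?A \<inter> insert z ` ?B = {}" using z by auto
  have zero: "alpha (insert z N) (W_N z N W) i (insert z S) = 0" if "S \<in> ?A" for S
  proof -
    have "insert z S \<in> W_N z N W" using that memN2 by auto
    hence "\<not> decisive (W_N z N W) i (insert z S)" "\<not> successful (W_N z N W) i (insert z S)" using that iz
      unfolding decisive_def yes_decisive_def no_decisive_def successful_def by auto
    then show ?thesis unfolding alpha_def by simp
  qed
  have eq: "alpha (insert z N) (W_N z N W) i S = alpha N W i S" if "S \<in> ?A" for S
  proof -
    have "S \<subseteq> N" using that by simp
    then have "alpha_fuel (Suc (Suc (card N))) (insert z N) (W_N z N W) i S = alpha_fuel (Suc (Suc (card N))) N W i S"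
      using alphaN[OF svg z iz] by blast
    also have "\<dots> = alpha_fuel (Suc (card N)) N W i S" using alpha_stab2[OF svg \<open>S \<subseteq> N\<close>] by simp
    finally show ?thesis unfolding alpha_def using fin z by simp
  qed
  have "(\<Sum>S\<in>{S. S \<subseteq> insert z N \<and> i \<notin> S}. alpha (insert z N) (W_N z N W) i S)
     = (\<Sum>S\<in>?A. alpha (insert z N) (W_N z N W) i S) + (\<Sum>S\<in>insert z ` ?B. alpha (insert z N) (W_N z N W) i S)"
    unfolding split_sets[OF z] by (rule sum.union_disjoint) (use finA B disj in auto)
  also have "\<dots> = (\<Sum>S\<in>?A. alpha N W i S)"
    unfolding B sum.reindex[OF inj_ins[OF z]] o_def using zero eq by simp
  finally show ?thesis unfolding RM_no_def using fin z by simp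
qed

theorem theorem9:
  fixes N :: "'a set" and W :: "'a set set" and i j z :: 'a
  assumes "svg N W" and "i \<in> N" and "j \<in> N" and "\<not> dummy N W j" and "z \<notin> N"
  shows "RM_yes N W i / RM_yes N W j
           = RM_yes (insert z N) (W_Y z W) i / RM_yes (insert z N) (W_Y z W) j
       \<and> RM_no N W i / RM_no N W j
           = RM_no (insert z N) (W_N z N W) i / RM_no (insert z N) (W_N z N W) j"
  by (simp add: RMY[OF assms(1,5)] RMN[OF assms(1,5)] assms(2,3))

end
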